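(* Let $X$ be a compact Hausdorff space and $\varphi:X\to X$ a homeomorphism. If $x\in X$ is aperiodic, then the representation $\pi_x$ of the semicrossed product $C(X)\rtimes_\varphi\mathbb{Z}^+$ on $\ell^2(\mathbb{N})$ is a nest representation.
   Context: Semicrossed product: let $\mathcal{A}_0$ be the algebra generated by $C(X)$ and a symbol $U$ subject to $fU=U(f\circ\varphi)$, with elements $\sum_{n=0}^NU^nf_n$; $C(X)\rtimes_\varphi\mathbb{Z}^+$ is its completion in the norm given by the supremum of $\|\pi(F)\|$ over homomorphisms $\pi$ into $\mathcal{B}(\mathcal{H})$ that are $*$-representations on $C(X)$ with $\pi(U)$ an isometry. For $x\in X$ set $x_n=\varphi^{n-1}(x)$, $n\ge1$, and define $\pi_x$ on $\ell^2(\mathbb{N})$ by $\pi_x(f)(z_1,z_2,\dots)=(f(x_1)z_1,f(x_2)z_2,\dots)$ and $\pi_x(U)(z_1,z_2,\dots)=(0,z_1,z_2,\dots)$. A point $x$ is aperiodic if $\varphi^n(x)\neq x$ for all $n\ge1$. A representation is a nest representation if the lattice of closed subspaces invariant under it is linearly ordered by inclusion. *)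

theory Defs
  imports "HOL-Analysis.Analysis"
begin

definition l2 :: "(nat \<Rightarrow> complex) set" where
  "l2 = {z. summable (\<lambda>n. (cmod (z n))\<^sup>2)}"

definition l2_norm :: "(nat \<Rightarrow> complex) \<Rightarrow> real" where
  "l2_norm z = sqrt (\<Sum>n. (cmod (z n))\<^sup>2)"

definition closed_subspace_l2 :: "(nat \<Rightarrow> complex) set \<Rightarrow> bool" where
  "closed_subspace_l2 M \<longleftrightarrow>
     M \<subseteq> l2 \<and> (\<lambda>n. 0) \<in> M \<and>
     (\<forall>u\<in>M. \<forall>v\<in>M. (\<lambda>n. u n + v n) \<in> M) \<and>
     (\<forall>c::complex. \<forall>u\<in>M. (\<lambda>n. c * u n) \<in> M) \<and>
     (\<forall>s z. (\<forall>k. s k \<in> M) \<longrightarrow> z \<in> l2 \<longrightarrow>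
        (\<lambda>k. l2_norm (\<lambda>n. s k n - z n)) \<longlonglongrightarrow> 0 \<longrightarrow> z \<in> M)"

definition shift_l2 :: "(nat \<Rightarrow> complex) \<Rightarrow> nat \<Rightarrow> complex" where
  "shift_l2 z = (\<lambda>n. if n = 0 then 0 else z (n - 1))"

text \<open>pi_x(f): diagonal operator; with 0-based indexing, the n-th coordinate is
  multiplied by f(phi^n x) (this is x_{n+1} = phi^n(x) in the paper's 1-based indexing).\<close>
definition pi_f :: "('a \<Rightarrow> 'a) \<Rightarrow> 'a \<Rightarrow> ('a \<Rightarrow> complex) \<Rightarrow> (nat \<Rightarrow> complex) \<Rightarrow> nat \<Rightarrow> complex" where
  "pi_f \<phi> x f z = (\<lambda>n. f ((\<phi> ^^ n) x) * z n)"

text \<open>Elements of the algebra A_0: finite sums sum_{n=0}^N U^n f_n, represented by the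
  coefficient list [f_0, ..., f_N] of continuous functions on X.\<close>
definition A0_elem :: "'a topology \<Rightarrow> ('a \<Rightarrow> complex) list \<Rightarrow> bool" where
  "A0_elem T fs \<longleftrightarrow> (\<forall>f\<in>set fs. continuous_map T euclidean f)"

definition pi_x :: "('a \<Rightarrow> 'a) \<Rightarrow> 'a \<Rightarrow> ('a \<Rightarrow> complex) list \<Rightarrow> (nat \<Rightarrow> complex) \<Rightarrow> nat \<Rightarrow> complex" where
  "pi_x \<phi> x fs z = (\<lambda>m. \<Sum>n<length fs. (shift_l2 ^^ n) (pi_f \<phi> x (fs ! n) z) m)"

definition invariant_lattice :: "'a topology \<Rightarrow> ('a \<Rightarrow> 'a) \<Rightarrow> 'a \<Rightarrow> (nat \<Rightarrow> complex) set set" where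
  "invariant_lattice T \<phi> x =
     {M. closed_subspace_l2 M \<and> (\<forall>fs. A0_elem T fs \<longrightarrow> (\<forall>z\<in>M. pi_x \<phi> x fs z \<in> M))}"

definition nest_representation :: "'a topology \<Rightarrow> ('a \<Rightarrow> 'a) \<Rightarrow> 'a \<Rightarrow> bool" where
  "nest_representation T \<phi> x \<longleftrightarrow>
     (\<forall>M\<in>invariant_lattice T \<phi> x. \<forall>N\<in>invariant_lattice T \<phi> x. M \<subseteq> N \<or> N \<subseteq> M)"

definition aperiodic :: "('a \<Rightarrow> 'a) \<Rightarrow> 'a \<Rightarrow> bool" where
  "aperiodic \<phi> x \<longleftrightarrow> (\<forall>n\<ge>1. (\<phi> ^^ n) x \<noteq> x)"

end

theory Submission
  imports Defs
begin


lemma l2_mono: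
  assumes "b \<in> l2" "\<And>n. cmod (a n) \<le> cmod (b n)"
  shows "a \<in> l2" "l2_norm a \<le> l2_norm b"
proof -
  have s: "summable (\<lambda>n. (cmod (b n))\<^sup>2)" using assms(1) by (simp add: l2_def)
  have le: "\<And>n. (cmod (a n))\<^sup>2 \<le> (cmod (b n))\<^sup>2"
    using assms(2) by (simp add: power_mono)
  have sa: "summable (\<lambda>n. (cmod (a n))\<^sup>2)"
    by (rule summable_comparison_test[OF _ s]) (use le in auto)
  then show "a \<in> l2" by (simp add: l2_def)
  show "l2_norm a \<le> l2_norm b" unfolding l2_norm_def
    by (rule real_sqrt_le_mono, rule suminf_le[OF le sa s])
qed

lemma l2_norm_nonneg: "a \<in> l2 \<Longrightarrow> l2_norm a \<ge> 0"
  unfolding l2_norm_def l2_def by (simp add: suminf_nonneg)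

lemma tail_sum_tendsto:
  fixes f :: "nat \<Rightarrow> real"
  assumes "summable f"
  shows "(\<lambda>i. \<Sum>n. f (n + i)) \<longlonglongrightarrow> 0"
proof -
  have "(\<lambda>i. suminf f - (\<Sum>k<i. f k)) \<longlonglongrightarrow> suminf f - suminf f"
    by (intro tendsto_intros summable_LIMSEQ assms)
  moreover have "\<And>i. (\<Sum>n. f (n + i)) = suminf f - (\<Sum>k<i. f k)"
    using suminf_split_initial_segment[OF assms] by (simp add: algebra_simps)
  ultimately show ?thesis by simp
qed

lemma tail_l2:
  assumes "z \<in> l2"
  shows "(\<lambda>j. l2_norm (\<lambda>n. if n \<le> j then 0 else z n)) \<longlonglongrightarrow> 0"
proof -
  let ?f = "\<lambda>n. (cmod (z n))\<^sup>2"
  have s: "summable ?f" using assms by (simp add: l2_def)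
  have eq: "(\<Sum>n. (cmod (if n \<le> j then 0 else z n))\<^sup>2) = (\<Sum>n. ?f (n + Suc j))" for j
  proof -
    let ?g = "\<lambda>n. (cmod (if n \<le> j then 0 else z n))\<^sup>2"
    have sg: "summable ?g"
      by (rule summable_comparison_test[OF _ s]) auto
    have "(\<Sum>i<Suc j. ?g i) = 0" by simp
    then show ?thesis using suminf_split_initial_segment[OF sg, of "Suc j"] by simp
  qed
  have "(\<lambda>j. sqrt (\<Sum>n. ?f (n + Suc j))) \<longlonglongrightarrow> sqrt 0"
    by (intro tendsto_real_sqrt) (rule LIMSEQ_Suc[OF tail_sum_tendsto[OF s]])
  then show ?thesis unfolding l2_norm_def eq by simp
qed



lemma cm_of_real: "continuous_map euclideanreal euclidean complex_of_real"
  by (simp add: continuous_on_of_real continuous_on_id)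

definition e :: "nat \<Rightarrow> nat \<Rightarrow> complex" where "e m = (\<lambda>n. if n = m then 1 else 0)"

lemma pi_x_single: "pi_x \<phi> x [f] z = pi_f \<phi> x f z"
  by (simp add: pi_x_def)

lemma pi_x_shift: "pi_x \<phi> x [\<lambda>_. 0, \<lambda>_. 1] z = shift_l2 z"
  by (simp add: pi_x_def numeral_2_eq_2 lessThan_Suc pi_f_def shift_l2_def)

lemma A0_const: "A0_elem T [\<lambda>_. 0, \<lambda>_. 1]"
  by (simp add: A0_elem_def)

lemma shift_e: "shift_l2 (e m) = e (Suc m)"
  by (rule ext) (auto simp: shift_l2_def e_def)

lemma cs_lim:
  assumes M: "closed_subspace_l2 M" and s: "\<And>k. s k \<in> M" and z: "z \<in> l2"
    and b: "\<And>k. k \<ge> K \<Longrightarrow> b k \<in> l2"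
    and bd: "\<And>k n. k \<ge> K \<Longrightarrow> cmod (s k n - z n) \<le> cmod (b k n)"
    and lim: "(\<lambda>k. l2_norm (b k)) \<longlonglongrightarrow> 0"
  shows "z \<in> M"
proof -
  have "(\<lambda>k. l2_norm (\<lambda>n. s k n - z n)) \<longlonglongrightarrow> 0"
  proof (rule Lim_null_comparison[OF _ lim])
    show "\<forall>\<^sub>F k in sequentially. norm (l2_norm (\<lambda>n. s k n - z n)) \<le> l2_norm (b k)"
      unfolding eventually_sequentially
    proof (intro exI allI impI)
      fix k assume "K \<le> k"
      then have "(\<lambda>n. s k n - z n) \<in> l2" "l2_norm (\<lambda>n. s k n - z n) \<le> l2_norm (b k)"
        using l2_mono[OF b bd] by auto
      then show "norm (l2_norm (\<lambda>n. s k n - z n)) \<le> l2_norm (b k)"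
        using l2_norm_nonneg by auto
    qed
  qed
  then show ?thesis using M s z unfolding closed_subspace_l2_def by blast
qed

lemma e_l2: "e m \<in> l2"
proof -
  have "summable (\<lambda>n. (cmod (e m n))\<^sup>2)"
    by (rule summable_finite[of "{m}"]) (auto simp: e_def)
  then show ?thesis by (simp add: l2_def)
qed

lemma trunc_in:
  assumes M: "closed_subspace_l2 M" and h: "\<And>m. z m \<noteq> 0 \<Longrightarrow> e m \<in> M"
  shows "(\<lambda>n. if n \<le> j then z n else 0) \<in> M"
proof -
  have zero: "(\<lambda>n. 0) \<in> M" using M by (simp add: closed_subspace_l2_def)
  have add: "\<And>u v. u \<in> M \<Longrightarrow> v \<in> M \<Longrightarrow> (\<lambda>n. u n + v n) \<in> M"
    using M unfolding closed_subspace_l2_def by blast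
  have smul: "\<And>c u. u \<in> M \<Longrightarrow> (\<lambda>n. c * u n) \<in> M"
    using M unfolding closed_subspace_l2_def by blast
  have t: "(\<lambda>n. if n = m then z m else 0) \<in> M" for m
  proof (cases "z m = 0")
    case True
    then have "(\<lambda>n. if n = m then z m else 0) = (\<lambda>n. 0)" by auto
    then show ?thesis using zero by simp
  next
    case False
    then have "(\<lambda>n. z m * e m n) \<in> M" using smul h by blast
    moreover have "(\<lambda>n. z m * e m n) = (\<lambda>n. if n = m then z m else 0)" by (auto simp: e_def)
    ultimately show ?thesis by simp
  qed
  show ?thesis
  proof (induction j)
    case 0
    have "(\<lambda>n. if n = 0 then z 0 else 0) = (\<lambda>n. if n \<le> 0 then z n else 0)" by (rule ext) simp
    with t[of 0] show ?case by simp
  next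
    case (Suc j)
    have "(\<lambda>n. (if n \<le> j then z n else 0) + (if n = Suc j then z (Suc j) else 0)) \<in> M"
      using add Suc t[of "Suc j"] by blast
    moreover have "(\<lambda>n. (if n \<le> j then z n else 0) + (if n = Suc j then z (Suc j) else 0))
       = (\<lambda>n. if n \<le> Suc j then z n else 0)" by (auto simp: le_Suc_eq)
    ultimately show ?case by simp
  qed
qed

lemma all_in:
  assumes M: "closed_subspace_l2 M" and h: "\<And>m. z m \<noteq> 0 \<Longrightarrow> e m \<in> M" and z: "z \<in> l2"
  shows "z \<in> M"
proof -
  define b where "b = (\<lambda>j n. if n \<le> j then 0 else z n)"
  define s where "s = (\<lambda>j n. if n \<le> j then z n else 0)"
  have s: "s k \<in> M" for k unfolding s_def by (rule trunc_in[OF M h])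
  have b: "b k \<in> l2" for k by (rule l2_mono(1)[OF z]) (simp add: b_def)
  have bd: "cmod (s k n - z n) \<le> cmod (b k n)" for k n by (simp add: s_def b_def)
  have l: "(\<lambda>k. l2_norm (b k)) \<longlonglongrightarrow> 0" unfolding b_def by (rule tail_l2[OF z])
  show ?thesis
  proof (rule cs_lim[where b=b and K=0 and s=s and M=M])
    show "closed_subspace_l2 M" by (rule M)
    show "s k \<in> M" for k by (rule s)
    show "z \<in> l2" by (rule z)
    show "b k \<in> l2" for k by (rule b)
    show "cmod (s k n - z n) \<le> cmod (b k n)" for k n by (rule bd)
    show "(\<lambda>k. l2_norm (b k)) \<longlonglongrightarrow> 0" by (rule l)
  qed
qed



locale setting =
  fixes T :: "'a topology" and \<phi> :: "'a \<Rightarrow> 'a" and x :: 'a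
  assumes cpt: "compact_space T" and hs: "Hausdorff_space T"
    and hm: "homeomorphic_map T T \<phi>"
    and xt: "x \<in> topspace T"
    and ap: "aperiodic \<phi> x"
begin

lemma phi_top: "y \<in> topspace T \<Longrightarrow> \<phi> y \<in> topspace T"
  using homeomorphic_imp_surjective_map[OF hm] by blast

lemma orb_top: "(\<phi> ^^ n) x \<in> topspace T"
  by (induction n) (auto simp: xt phi_top)

lemma orb_aux: "(\<phi> ^^ (i + d)) x = (\<phi> ^^ i) x \<Longrightarrow> (\<phi> ^^ d) x = x"
proof (induction i)
  case 0 then show ?case by simp
next
  case (Suc i)
  have "\<phi> ((\<phi> ^^ (i + d)) x) = \<phi> ((\<phi> ^^ i) x)" using Suc.prems by simp
  then have "(\<phi> ^^ (i + d)) x = (\<phi> ^^ i) x"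
    using homeomorphic_imp_injective_map[OF hm] orb_top unfolding inj_on_def by blast
  then show ?case by (rule Suc.IH)
qed

lemma orb_inj: assumes "i \<noteq> k" shows "(\<phi> ^^ i) x \<noteq> (\<phi> ^^ k) x"
proof
  assume eq: "(\<phi> ^^ i) x = (\<phi> ^^ k) x"
  have "\<exists>a d. d \<ge> 1 \<and> (\<phi> ^^ (a + d)) x = (\<phi> ^^ a) x"
  proof (cases "i < k")
    case True then show ?thesis using eq by (intro exI[of _ i] exI[of _ "k - i"]) auto
  next
    case False then show ?thesis using eq assms by (intro exI[of _ k] exI[of _ "i - k"]) auto
  qed
  then obtain a d where "d \<ge> 1" "(\<phi> ^^ (a + d)) x = (\<phi> ^^ a) x" by blast
  then show False using orb_aux ap unfolding aperiodic_def by blast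
qed

lemma urys:
  "\<exists>f. continuous_map T euclidean f \<and> f ((\<phi> ^^ k) x) = 1 \<and>
       (\<forall>i\<le>j. i \<noteq> k \<longrightarrow> f ((\<phi> ^^ i) x) = 0) \<and> (\<forall>n. cmod (f ((\<phi> ^^ n) x)) \<le> 1)"
proof -
  have ns: "normal_space T" using compact_Hausdorff_or_regular_imp_normal_space cpt hs by blast
  have t1: "t1_space T" using Hausdorff_imp_t1_space hs by blast
  let ?S = "(\<lambda>i. (\<phi> ^^ i) x) ` ({..j} - {k})"
  have "finite ?S" "?S \<subseteq> topspace T" using orb_top by auto
  then have c1: "closedin T ?S" using t1 unfolding t1_space_closedin_finite by blast
  have c2: "closedin T {(\<phi> ^^ k) x}" using t1 orb_top unfolding t1_space_closedin_finite by auto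
  have dj: "disjnt ?S {(\<phi> ^^ k) x}" using orb_inj by (auto simp: disjnt_def) metis
  obtain g where g: "continuous_map T (top_of_set {0..1::real}) g" "g ` ?S \<subseteq> {0}"
      "g ` {(\<phi> ^^ k) x} \<subseteq> {1}"
    using Urysohn_lemma[OF ns c1 c2 dj, of 0 1] by auto
  have gr: "continuous_map T euclideanreal g"
    using g(1) continuous_map_into_fulltopology by blast
  have gv: "g ((\<phi> ^^ n) x) \<in> {0..1}" for n
    using continuous_map_image_subset_topspace[OF g(1)] orb_top[of n] by (auto simp del: atLeastAtMost_iff)
  show ?thesis
  proof (intro exI conjI allI impI)
    show "continuous_map T euclidean (complex_of_real \<circ> g)"
      by (rule continuous_map_compose[OF gr cm_of_real])
    show "(complex_of_real \<circ> g) ((\<phi> ^^ k) x) = 1" using g(3) by auto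
    show "(complex_of_real \<circ> g) ((\<phi> ^^ i) x) = 0" if "i \<le> j" "i \<noteq> k" for i
      using g(2) that by auto
    show "cmod ((complex_of_real \<circ> g) ((\<phi> ^^ n) x)) \<le> 1" for n using gv[of n] by auto
  qed
qed

lemma inv_props:
  assumes "M \<in> invariant_lattice T \<phi> x"
  shows "closed_subspace_l2 M" "\<And>fs z. A0_elem T fs \<Longrightarrow> z \<in> M \<Longrightarrow> pi_x \<phi> x fs z \<in> M"
  using assms by (auto simp: invariant_lattice_def)

lemma isolate:
  assumes M: "M \<in> invariant_lattice T \<phi> x" and w: "w \<in> M" and wk: "w k \<noteq> 0"
  shows "e k \<in> M"
proof -
  have cs: "closed_subspace_l2 M" by (rule inv_props(1)[OF M])
  have wl2: "w \<in> l2" using cs w by (auto simp: closed_subspace_l2_def)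
  from urys[of k] have "\<forall>j. \<exists>f. continuous_map T euclidean f \<and> f ((\<phi> ^^ k) x) = 1 \<and>
       (\<forall>i\<le>j. i \<noteq> k \<longrightarrow> f ((\<phi> ^^ i) x) = 0) \<and> (\<forall>n. cmod (f ((\<phi> ^^ n) x)) \<le> 1)" by blast
  then obtain F where F: "\<And>j. continuous_map T euclidean (F j)" "\<And>j. F j ((\<phi> ^^ k) x) = 1"
     "\<And>j i. i \<le> j \<Longrightarrow> i \<noteq> k \<Longrightarrow> F j ((\<phi> ^^ i) x) = 0" "\<And>j n. cmod (F j ((\<phi> ^^ n) x)) \<le> 1"
    by metis
  define s where "s = (\<lambda>j. pi_f \<phi> x (F j) w)"
  define b where "b = (\<lambda>j n. if n \<le> j then 0 else w n)"
  define z where "z = (\<lambda>n. w k * e k n)"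
  have s: "s j \<in> M" for j
  proof -
    have "A0_elem T [F j]" using F(1) by (simp add: A0_elem_def)
    then have "pi_x \<phi> x [F j] w \<in> M" using inv_props(2)[OF M] w by blast
    then show ?thesis by (simp add: s_def pi_x_single)
  qed
  have zl: "z \<in> l2" by (rule l2_mono(1)[OF wl2]) (auto simp: z_def e_def)
  have b: "b j \<in> l2" for j by (rule l2_mono(1)[OF wl2]) (simp add: b_def)
  have bd: "cmod (s j n - z n) \<le> cmod (b j n)" if "k \<le> j" for j n
  proof (cases "n \<le> j")
    case True
    have "F j ((\<phi> ^^ n) x) = 0" if "n \<noteq> k" using F(3)[of n j] True that by blast
    then show ?thesis using F(2)[of j] by (cases "n = k") (auto simp: s_def b_def z_def e_def pi_f_def)
  next
    case False
    then have "z n = 0" using that by (auto simp: z_def e_def)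
    moreover have "cmod (s j n) \<le> cmod (w n)"
      using F(4)[of j n] by (simp add: s_def pi_f_def norm_mult mult_left_le_one_le)
    ultimately show ?thesis using False by (simp add: b_def)
  qed
  have l: "(\<lambda>j. l2_norm (b j)) \<longlonglongrightarrow> 0" unfolding b_def by (rule tail_l2[OF wl2])
  have zM: "z \<in> M"
  proof (rule cs_lim[where b=b and K=k and s=s and M=M])
    show "closed_subspace_l2 M" by (rule cs)
    show "s j \<in> M" for j by (rule s)
    show "z \<in> l2" by (rule zl)
    show "b j \<in> l2" for j by (rule b)
    show "cmod (s j n - z n) \<le> cmod (b j n)" if "k \<le> j" for j n using that by (rule bd)
    show "(\<lambda>j. l2_norm (b j)) \<longlonglongrightarrow> 0" by (rule l)
  qed
  have "(\<lambda>n. inverse (w k) * z n) \<in> M"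
    using cs zM unfolding closed_subspace_l2_def by blast
  moreover have "(\<lambda>n. inverse (w k) * z n) = e k" using wk by (auto simp: z_def)
  ultimately show ?thesis by simp
qed

lemma shift_up:
  assumes M: "M \<in> invariant_lattice T \<phi> x" and "e k \<in> M"
  shows "e (k + d) \<in> M"
proof (induction d)
  case 0 then show ?case using assms by simp
next
  case (Suc d)
  have "pi_x \<phi> x [\<lambda>_. 0, \<lambda>_. 1] (e (k + d)) \<in> M" using inv_props(2)[OF M A0_const Suc] .
  then show ?case by (simp add: pi_x_shift shift_e)
qed

definition U :: "(nat \<Rightarrow> complex) set \<Rightarrow> nat set" where
  "U M = {m. \<exists>w\<in>M. \<exists>k\<le>m. w k \<noteq> 0}"

lemma charact:
  assumes M: "M \<in> invariant_lattice T \<phi> x"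
  shows "M = {z \<in> l2. \<forall>m. z m \<noteq> 0 \<longrightarrow> m \<in> U M}"
proof
  have cs: "closed_subspace_l2 M" by (rule inv_props(1)[OF M])
  show "M \<subseteq> {z \<in> l2. \<forall>m. z m \<noteq> 0 \<longrightarrow> m \<in> U M}"
    using cs by (auto simp: closed_subspace_l2_def U_def)
  show "{z \<in> l2. \<forall>m. z m \<noteq> 0 \<longrightarrow> m \<in> U M} \<subseteq> M"
  proof safe
    fix z assume z: "z \<in> l2" and h: "\<forall>m. z m \<noteq> 0 \<longrightarrow> m \<in> U M"
    have "e m \<in> M" if "z m \<noteq> 0" for m
    proof -
      from h that obtain w k where "w \<in> M" "k \<le> m" "w k \<noteq> 0" by (auto simp: U_def)
      then have "e k \<in> M" using isolate[OF M] by blast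
      then have "e (k + (m - k)) \<in> M" by (rule shift_up[OF M])
      then show ?thesis using \<open>k \<le> m\<close> by simp
    qed
    then show "z \<in> M" using all_in[OF cs _ z] by blast
  qed
qed

lemma U_up: "m \<in> U M \<Longrightarrow> m \<le> m' \<Longrightarrow> m' \<in> U M"
  unfolding U_def by (auto intro: order_trans)

lemma nest: "nest_representation T \<phi> x"
  unfolding nest_representation_def
proof (intro ballI)
  fix M N assume M: "M \<in> invariant_lattice T \<phi> x" and N: "N \<in> invariant_lattice T \<phi> x"
  have "U M \<subseteq> U N \<or> U N \<subseteq> U M"
  proof (rule ccontr)
    assume "\<not> ?thesis"
    then obtain m n where m: "m \<in> U M" "m \<notin> U N" and n: "n \<in> U N" "n \<notin> U M" by blast
    show False
    proof (cases "m \<le> n")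
      case True then show False using U_up[OF m(1) True] n(2) by simp
    next
      case False then show False using U_up[OF n(1), of m] m(2) by simp
    qed
  qed
  then show "M \<subseteq> N \<or> N \<subseteq> M"
    using charact[OF M] charact[OF N] by blast
qed

end


theorem proposition1:
  fixes T :: "'a topology" and \<phi> :: "'a \<Rightarrow> 'a" and x :: 'a
  assumes "compact_space T" and "Hausdorff_space T"
    and "homeomorphic_map T T \<phi>"
    and "x \<in> topspace T"
    and "aperiodic \<phi> x"
  shows "nest_representation T \<phi> x"
proof -
  interpret setting T \<phi> x using assms by unfold_locales
  show ?thesis by (rule nest)
qed

end
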